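(* Let $(X,d)$ be a complete metric space and let $T\colon X\to X$ be a mapping satisfying: (i) for every $\varepsilon>0$ there exists $\delta>0$ such that for all $x,y\in X$, $\frac{1}{2}\{d(x,Tx)+d(y,Ty)\}<\varepsilon+\delta$ implies $d(Tx,Ty)\le\varepsilon$; (ii) for all $x,y\in X$, $x\neq y$ implies $d(Tx,Ty)<\frac{1}{2}\{d(x,Tx)+d(y,Ty)\}$. Then $T$ has a unique fixed point. *)

theory Defs
  imports "HOL-Analysis.Analysis"
begin

end

theory Submission
  imports Defs
begin

theorem theorem2p1:
  fixes T :: "'a::complete_space \<Rightarrow> 'a"
  assumes i: "\<And>\<epsilon>. \<epsilon> > 0 \<Longrightarrow> \<exists>\<delta>>0. \<forall>x y.
      (dist x (T x) + dist y (T y)) / 2 < \<epsilon> + \<delta> \<longrightarrow> dist (T x) (T y) \<le> \<epsilon>"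
    and ii: "\<And>x y. x \<noteq> y \<Longrightarrow> dist (T x) (T y) < (dist x (T x) + dist y (T y)) / 2"
  shows "\<exists>!x. T x = x"
proof -
  fix x0 :: 'a
  define x where "x n = (T ^^ n) x0" for n
  have xS: "x (Suc n) = T (x n)" for n by (simp add: x_def)
  define a where "a n = dist (x n) (x (Suc n))" for n
  have strict: "a (Suc n) < a n" if "x n \<noteq> x (Suc n)" for n
    using ii[OF that] by (simp add: a_def xS dist_commute)
  have dec: "a (Suc n) \<le> a n" for n
  proof (cases "x n = x (Suc n)")
    case True
    then have "x (Suc (Suc n)) = x (Suc n)" by (metis xS)
    then show ?thesis by (simp add: a_def)
  next
    case False then show ?thesis using strict by fastforce
  qed
  have "decseq a" using dec by (simp add: decseq_SucI)
  moreover have "\<forall>n. 0 \<le> a n" by (simp add: a_def)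
  ultimately obtain L where L: "a \<longlonglongrightarrow> L" "\<forall>n. L \<le> a n"
    using decseq_convergent by blast
  have L0: "L = 0"
  proof (rule ccontr)
    assume "L \<noteq> 0"
    have "L \<ge> 0" using L(1) \<open>\<forall>n. 0 \<le> a n\<close> by (meson LIMSEQ_le_const)
    with \<open>L \<noteq> 0\<close> have Lp: "L > 0" by simp
    obtain \<delta> where d: "\<delta> > 0" "\<forall>x y. (dist x (T x) + dist y (T y)) / 2 < L + \<delta> \<longrightarrow> dist (T x) (T y) \<le> L"
      using i[OF Lp] by blast
    have "eventually (\<lambda>n. a n < L + \<delta>) sequentially"
      using L(1) d(1) by (simp add: order_tendstoD(2))
    then obtain n where n: "a n < L + \<delta>" by (meson eventually_sequentially order_refl)
    have ne: "x m \<noteq> x (Suc m)" for m using L(2) Lp by (metis a_def dist_self not_le)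
    have "a (Suc n) < a n" using strict ne by blast
    have "a (Suc n) > L" using strict[OF ne[of "Suc n"]] L(2) by (meson le_less_trans)
    have "(a n + a (Suc n)) / 2 < L + \<delta>" using n \<open>a (Suc n) < a n\<close> by simp
    then have "a (Suc n) \<le> L" using d(2)[rule_format, of "x n" "x (Suc n)"]
      by (simp add: a_def xS)
    then show False using \<open>a (Suc n) > L\<close> by simp
  qed
  have "Cauchy x"
  proof (rule metric_CauchyI)
    fix e :: real assume e: "e > 0"
    obtain \<delta> where d: "\<delta> > 0" "\<forall>x y. (dist x (T x) + dist y (T y)) / 2 < e/2 + \<delta> \<longrightarrow> dist (T x) (T y) \<le> e/2"
      using i[of "e/2"] e by auto
    have "eventually (\<lambda>n. a n < \<delta>) sequentially"
      using L(1) L0 d(1) by (simp add: order_tendstoD(2))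
    then obtain N where N: "\<forall>n\<ge>N. a n < \<delta>" by (auto simp: eventually_sequentially)
    show "\<exists>M. \<forall>m\<ge>M. \<forall>n\<ge>M. dist (x m) (x n) < e"
    proof (intro exI allI impI)
      fix m n assume m: "m \<ge> Suc N" and n: "n \<ge> Suc N"
      obtain m' where m': "m = Suc m'" "m' \<ge> N" using m by (cases m) auto
      obtain n' where n': "n = Suc n'" "n' \<ge> N" using n by (cases n) auto
      have "a m' < \<delta>" "a n' < \<delta>" using N m'(2) n'(2) by auto
      then have "(a m' + a n') / 2 < e/2 + \<delta>" using e by simp
      then have "dist (x m) (x n) \<le> e/2" using d(2)[rule_format, of "x m'" "x n'"]
        by (simp add: a_def xS m' n')
      then show "dist (x m) (x n) < e" using e by simp
    qed
  qed
  then obtain z where z: "x \<longlonglongrightarrow> z"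
    using Cauchy_convergent convergent_def by blast
  have ineq: "dist (T z) (x (Suc n)) \<le> (dist z (T z) + a n) / 2" for n
  proof (cases "z = x n")
    case True then show ?thesis by (simp add: xS a_def)
  next
    case False then show ?thesis using ii[OF False] by (simp add: a_def xS)
  qed
  have l1: "(\<lambda>n. dist (T z) (x (Suc n))) \<longlonglongrightarrow> dist (T z) z"
    by (intro tendsto_intros LIMSEQ_Suc z)
  have l2: "(\<lambda>n. (dist z (T z) + a n) / 2) \<longlonglongrightarrow> (dist z (T z) + 0) / 2"
    using L(1) L0 by (intro tendsto_intros) auto
  have "dist (T z) z \<le> (dist z (T z) + 0) / 2"
    using LIMSEQ_le[OF l1 l2] ineq by blast
  then have "dist z (T z) = 0" by (simp add: dist_commute)
  then have fz: "T z = z" by simp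
  show ?thesis
  proof (rule ex1I[of _ z])
    show "T z = z" by (rule fz)
  next
    fix y assume y: "T y = y"
    show "y = z"
    proof (rule ccontr)
      assume "y \<noteq> z"
      from ii[OF this] y fz show False by simp
    qed
  qed
qed

end
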